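(* Let $\lambda,\alpha_1,\alpha_2\in\mathbb{C}^*$ and $h_1=\xi_1t+\eta_1$, $h_2=\xi_2t+\eta_2\in\mathbb{C}[t]$ with $\alpha_1\xi_1=\alpha_2\xi_2\neq 0$. Define complex numbers $b_i$ ($i\in\mathbb{Z}_+$) by $b_0=1$, $b_1=0$, $b_{i+1}=ib_i+i(\eta_2-\eta_1)b_{i-1}$ for $i\in\mathbb{N}$, and polynomials $g_n(x)=\sum_{i=0}^n\binom{n}{i}b_{n-i}x^i$ for $n\in\mathbb{Z}_+$. Let $\phi:\Omega(\lambda,\alpha_1,h_1)\to\Omega(\lambda,\alpha_2,h_2)$ be the linear map with $\phi(s^ih_1^n)=s^ig_n(h_2)$ for all $n,i\in\mathbb{Z}_+$ (here $\{s^ih_1^n\}$ is a basis of $\mathbb{C}[t,s]$). Then $\phi$ is an isomorphism of $\mathrm{Vir}$-modules.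
   Context: $\mathrm{Vir}$ is the Lie algebra with basis $\{d_i,c\mid i\in\mathbb{Z}\}$ and brackets $[d_i,d_j]=(j-i)d_{i+j}+\delta_{i,-j}\frac{i^3-i}{12}c$, $[c,d_i]=0$. For $\lambda\in\mathbb{C}^*$, $\alpha\in\mathbb{C}$, $h\in\mathbb{C}[t]$, define operators on $\mathbb{C}[t]$ by $F(f)=\frac{h(t)-h(\alpha)}{t-\alpha}f(t)-f'(t)$ and $G(f)=h(\alpha)f+tF(f)$. The $\mathrm{Vir}$-module $\Omega(\lambda,\alpha,h)$ is the vector space $\mathbb{C}[t,s]$ with $c$ acting as $0$ and $d_m(f(t)s^i)=\lambda^m(s-m)^i\big(sf+mG(f)-m^2\alpha F(f)\big)$ for $m\in\mathbb{Z}$, $i\in\mathbb{Z}_+$, $f\in\mathbb{C}[t]$. *)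

theory Defs
  imports "HOL-Computational_Algebra.Polynomial"
begin

text \<open>C[t,s] is modelled as complex poly poly: polynomials in s whose
coefficients are polynomials in t. The element f(t) s^i is monom f i.\<close>

definition opF :: "complex \<Rightarrow> complex poly \<Rightarrow> complex poly \<Rightarrow> complex poly" where
  "opF \<alpha> h f = ((h - [:poly h \<alpha>:]) div [:- \<alpha>, 1:]) * f - pderiv f"

definition opG :: "complex \<Rightarrow> complex poly \<Rightarrow> complex poly \<Rightarrow> complex poly" where
  "opG \<alpha> h f = smult (poly h \<alpha>) f + [:0, 1:] * opF \<alpha> h f"

text \<open>Action of d_m on f(t) s^i in Omega(lambda, alpha, h).\<close>
definition omega_mono :: "complex \<Rightarrow> complex \<Rightarrow> complex poly \<Rightarrow> int \<Rightarrow> complex poly \<Rightarrow> nat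
    \<Rightarrow> complex poly poly" where
  "omega_mono lam \<alpha> h m f i =
     smult [:lam powi m:]
       ((pCons (- [:of_int m:]) 1) ^ i *
        pCons (smult (of_int m) (opG \<alpha> h f) - smult (of_int m ^ 2 * \<alpha>) (opF \<alpha> h f)) [:f:])"

definition omega_act :: "complex \<Rightarrow> complex \<Rightarrow> complex poly \<Rightarrow> int \<Rightarrow> complex poly poly
    \<Rightarrow> complex poly poly" where
  "omega_act lam \<alpha> h m P = (\<Sum>i\<le>degree P. omega_mono lam \<alpha> h m (coeff P i) i)"

text \<open>The sequence b_i with parameter e = eta2 - eta1.\<close>
fun bseq :: "complex \<Rightarrow> nat \<Rightarrow> complex" where
  "bseq e 0 = 1"
| "bseq e (Suc 0) = 0"
| "bseq e (Suc (Suc i)) = of_nat (Suc i) * bseq e (Suc i) + of_nat (Suc i) * e * bseq e i"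

definition gpoly :: "complex \<Rightarrow> nat \<Rightarrow> complex poly \<Rightarrow> complex poly" where
  "gpoly e n x = (\<Sum>i\<le>n. smult (of_nat (n choose i) * bseq e (n - i)) (x ^ i))"

end

theory Submission
  imports Defs
begin

abbreviation gg :: "complex \<Rightarrow> nat \<Rightarrow> complex poly" where
  "gg e n \<equiv> gpoly e n [:0,1:]"

lemma coeff_gg: "coeff (gg e n) i = (if i \<le> n then of_nat (n choose i) * bseq e (n - i) else 0)"
  unfolding gpoly_def by (simp add: coeff_sum monom_altdef[symmetric] coeff_monom)

lemma gg0: "gg e 0 = 1"
  by (rule poly_eqI) (simp add: coeff_gg)

lemma gg1: "gg e 1 = [:0,1:]"
  by (rule poly_eqI) (auto simp add: coeff_gg coeff_pCons split: nat.split)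

lemma pderiv_gg_Suc: "pderiv (gg e (Suc n)) = smult (of_nat (Suc n)) (gg e n)"
proof (rule poly_eqI)
  fix i
  have "of_nat (Suc i) * (of_nat (Suc n choose Suc i) :: complex) = of_nat (Suc n) * of_nat (n choose i)"
    using Suc_times_binomial_eq[of n i] by (metis mult.commute of_nat_mult)
  then show "coeff (pderiv (gg e (Suc n))) i = coeff (smult (of_nat (Suc n)) (gg e n)) i"
    by (simp add: coeff_pderiv coeff_gg mult.assoc[symmetric])
qed

lemma pderiv_gg0: "pderiv (gg e 0) = 0"
  by (simp add: gg0)

lemma poly_gg_0: "poly (gg e n) 0 = bseq e n"
  by (simp add: poly_0_coeff_0 coeff_gg)


definition Rr :: "complex \<Rightarrow> nat \<Rightarrow> complex poly" where
  "Rr e n = gg e (Suc (Suc n)) - ([:0,1:] + [:of_nat (Suc n):]) * gg e (Suc n)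
           + smult (of_nat (Suc n)) (([:0,1:] - [:e:]) * gg e n)"

lemma zero_by_deriv: "pderiv (p::complex poly) = 0 \<Longrightarrow> poly p 0 = 0 \<Longrightarrow> p = 0"
  by (auto dest: pderiv_iszero)

lemma Rr_zero: "Rr e n = 0"
proof (induction n)
  case 0
  have d: "pderiv (Rr e 0) = 0"
    unfolding Rr_def
    using pderiv_gg_Suc[of e 1] pderiv_gg_Suc[of e 0] gg0[of e] gg1[of e]
    by (simp add: pderiv_mult pderiv_pCons pderiv_smult algebra_simps pderiv_diff pderiv_add numeral_2_eq_2)
  have "poly (Rr e 0) 0 = 0"
    unfolding Rr_def by (simp add: poly_gg_0 numeral_2_eq_2)
  with d show ?case by (rule zero_by_deriv)
next
  case (Suc n)
  have IH: "\<And>y. poly (gg e (Suc (Suc n))) y = (y + of_nat (Suc n)) * poly (gg e (Suc n)) y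
       - of_nat (Suc n) * ((y - e) * poly (gg e n) y)"
    using arg_cong[OF Suc.IH, of "\<lambda>p. poly p y" for y] unfolding Rr_def
    by (simp add: algebra_simps)
  have "poly (pderiv (Rr e (Suc n))) y = 0" for y
    unfolding Rr_def
    by (simp add: pderiv_gg_Suc pderiv_mult pderiv_pCons pderiv_smult pderiv_diff pderiv_add IH algebra_simps)
  then have d: "pderiv (Rr e (Suc n)) = 0"
    using poly_eq_poly_eq_iff[of "pderiv (Rr e (Suc n))" 0] by auto
  have "poly (Rr e (Suc n)) 0 = 0"
    unfolding Rr_def by (simp add: poly_gg_0 algebra_simps)
  with d show ?case by (rule zero_by_deriv)
qed

lemma pcompose_x_pow: "pcompose ([:0,1:] ^ i) q = (q::'a::comm_ring_1 poly) ^ i"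
  by (induction i) (simp_all add: pcompose_pCons pcompose_1)

lemma pcompose_monom: "pcompose (monom c i) q = smult c ((q::'a::comm_ring_1 poly) ^ i)"
  by (simp add: monom_altdef pcompose_smult pcompose_x_pow)

lemma gpoly_pcompose: "gpoly e n x = pcompose (gg e n) x"
  unfolding gpoly_def by (simp add: pcompose_sum pcompose_smult pcompose_x_pow)

lemma degree_gg: "degree (gg e n) = n"
proof -
  have "degree (gg e n) \<le> n" by (rule degree_le) (simp add: coeff_gg)
  moreover have "coeff (gg e n) n \<noteq> 0" by (simp add: coeff_gg)
  ultimately show ?thesis by (simp add: le_antisym le_degree)
qed

lemma lead_gg: "coeff (gg e n) n = 1"
  by (simp add: coeff_gg)

lemma gp_degree: "\<xi> \<noteq> 0 \<Longrightarrow> degree (gpoly e n [:\<eta>, \<xi>:]) = n"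
  by (subst gpoly_pcompose) (simp add: degree_pcompose degree_gg)

lemma gp_lead: "\<xi> \<noteq> 0 \<Longrightarrow> coeff (gpoly e n [:\<eta>, \<xi>:]) n = \<xi> ^ n"
  using lead_coeff_comp[of "[:\<eta>, \<xi>:]" "gg e n"] gp_degree[of \<xi> e n \<eta>]
  by (subst gpoly_pcompose) (simp add: degree_gg lead_gg gpoly_pcompose[of e n "[:\<eta>, \<xi>:]"])

lemma opF_lin: "opF \<alpha> [:\<eta>, \<xi>:] f = smult \<xi> f - pderiv f"
proof -
  have e: "[:\<eta>, \<xi>:] - [:poly [:\<eta>, \<xi>:] \<alpha>:] = [:\<xi>:] * [:- \<alpha>, 1:]" by simp
  have "([:\<eta>, \<xi>:] - [:poly [:\<eta>, \<xi>:] \<alpha>:]) div [:- \<alpha>, 1:] = [:\<xi>:]"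
    unfolding e by (rule nonzero_mult_div_cancel_right) simp
  then show ?thesis unfolding opF_def by simp
qed

lemma opG_lin: "opG \<alpha> [:\<eta>, \<xi>:] f = smult (\<eta> + \<xi> * \<alpha>) f + [:0,1:] * (smult \<xi> f - pderiv f)"
  unfolding opG_def opF_lin by (simp add: mult.commute)

lemma omega_mono_0: "omega_mono lam \<alpha> h m 0 i = 0"
  unfolding omega_mono_def opF_def opG_def by simp

lemma additive_sum:
  fixes L :: "'a::ab_group_add \<Rightarrow> 'b::ab_group_add"
  assumes "\<And>a b. L (a + b) = L a + L b"
  shows "L (sum g A) = (\<Sum>x\<in>A. L (g x))"
proof -
  have z: "L 0 = 0" using assms[of 0 0] by simp
  show ?thesis
    by (induction A rule: infinite_finite_induct) (simp_all add: z assms)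
qed

lemma monom_smult_const: "monom (smult c p) i = smult [:c:] (monom p i)"
  by (rule poly_eqI) (simp add: coeff_monom)

lemma expand:
  fixes f :: "complex poly"
  assumes xi: "\<xi> \<noteq> 0"
  shows "f = (\<Sum>n\<le>degree f. smult (coeff (pcompose f [:- \<eta>/\<xi>, 1/\<xi>:]) n) ([:\<eta>, \<xi>:] ^ n))"
proof -
  define F where "F = pcompose f [:- \<eta>/\<xi>, 1/\<xi>:]"
  have T: "pcompose [:- \<eta>/\<xi>, 1/\<xi>:] [:\<eta>, \<xi>:] = [:0, 1:]"
    using xi by (simp add: pcompose_pCons field_simps)
  have "f = pcompose F [:\<eta>, \<xi>:]"
    unfolding F_def pcompose_assoc[symmetric] T by simp
  also have "\<dots> = pcompose (\<Sum>i\<le>degree F. monom (coeff F i) i) [:\<eta>, \<xi>:]"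
    by (simp add: poly_as_sum_of_monoms)
  also have "\<dots> = (\<Sum>n\<le>degree F. smult (coeff F n) ([:\<eta>, \<xi>:] ^ n))"
    by (simp add: pcompose_sum pcompose_monom)
  also have "degree F = degree f" unfolding F_def using xi by (simp add: degree_pcompose)
  finally show ?thesis unfolding F_def .
qed

context
  fixes \<phi> :: "complex poly poly \<Rightarrow> complex poly poly" and \<eta>1 \<xi>1 \<eta>2 \<xi>2 :: complex
  assumes add: "\<And>P Q. \<phi> (P + Q) = \<phi> P + \<phi> Q"
    and scal: "\<And>c P. \<phi> (smult [:c:] P) = smult [:c:] (\<phi> P)"
    and basis: "\<And>n i. \<phi> (monom ([:\<eta>1, \<xi>1:] ^ n) i)
                       = monom (gpoly (\<eta>2 - \<eta>1) n [:\<eta>2, \<xi>2:]) i"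
    and xi1: "\<xi>1 \<noteq> 0" and xi2: "\<xi>2 \<noteq> 0"
begin

lemma phi_sum: "\<phi> (sum g A) = (\<Sum>x\<in>A. \<phi> (g x))"
  by (rule additive_sum[OF add])

lemma phi_monom_ex: "\<exists>Q. \<forall>i. \<phi> (monom f i) = monom Q i"
proof -
  define c where "c n = coeff (pcompose f [:- \<eta>1/\<xi>1, 1/\<xi>1:]) n" for n
  have "\<phi> (monom f i) = monom (\<Sum>n\<le>degree f. smult (c n) (gpoly (\<eta>2 - \<eta>1) n [:\<eta>2, \<xi>2:])) i" for i
  proof -
    have "monom f i = monom (\<Sum>n\<le>degree f. smult (c n) ([:\<eta>1, \<xi>1:] ^ n)) i"
      unfolding c_def using expand[OF xi1, of f \<eta>1] by simp
    also have "\<dots> = (\<Sum>n\<le>degree f. smult [:c n:] (monom ([:\<eta>1, \<xi>1:] ^ n) i))"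
      by (simp add: monom_sum monom_smult_const)
    finally have "\<phi> (monom f i) = (\<Sum>n\<le>degree f. smult [:c n:] (monom (gpoly (\<eta>2 - \<eta>1) n [:\<eta>2, \<xi>2:]) i))"
      by (simp add: phi_sum scal basis)
    also have "\<dots> = monom (\<Sum>n\<le>degree f. smult (c n) (gpoly (\<eta>2 - \<eta>1) n [:\<eta>2, \<xi>2:])) i"
      by (simp add: monom_sum monom_smult_const)
    finally show ?thesis .
  qed
  then show ?thesis by blast
qed

definition psi :: "complex poly \<Rightarrow> complex poly" where
  "psi f = coeff (\<phi> (monom f 0)) 0"

lemma phi_monom: "\<phi> (monom f i) = monom (psi f) i"
proof -
  obtain Q where Q: "\<And>i. \<phi> (monom f i) = monom Q i" using phi_monom_ex by blast
  show ?thesis unfolding psi_def Q by simp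
qed

lemma psi_add: "psi (f + g) = psi f + psi g"
  unfolding psi_def by (simp add: add_monom[symmetric] add)

lemma psi_smult: "psi (smult c f) = smult c (psi f)"
  unfolding psi_def by (simp add: monom_smult_const scal)

lemma psi_0: "psi 0 = 0"
  using psi_add[of 0 0] by simp

lemma psi_diff: "psi (f - g) = psi f - psi g"
  using psi_add[of "f - g" g] by (simp add: algebra_simps)

lemma psi_h1: "psi ([:\<eta>1, \<xi>1:] ^ n) = gpoly (\<eta>2 - \<eta>1) n [:\<eta>2, \<xi>2:]"
  using phi_monom[of "[:\<eta>1, \<xi>1:] ^ n" 0] basis[of n 0] by simp

lemma psi_sum: "psi (sum g A) = (\<Sum>x\<in>A. psi (g x))"
  by (rule additive_sum[OF psi_add])

lemma phi_map: "\<phi> P = map_poly psi P"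
proof (rule poly_eqI)
  fix j
  have "\<phi> P = (\<Sum>i\<le>degree P. monom (psi (coeff P i)) i)"
    by (subst poly_as_sum_of_monoms[of P, symmetric]) (simp add: phi_sum phi_monom)
  then have "coeff (\<phi> P) j = psi (coeff P j)"
    by (auto simp add: coeff_sum coeff_monom psi_0 coeff_eq_0)
  then show "coeff (\<phi> P) j = coeff (map_poly psi P) j"
    by (simp add: coeff_map_poly psi_0)
qed

lemma linear_eq:
  fixes La Lb :: "complex poly \<Rightarrow> complex poly"
  assumes a1: "\<And>f g. La (f + g) = La f + La g" and s1: "\<And>c f. La (smult c f) = smult c (La f)"
    and a2: "\<And>f g. Lb (f + g) = Lb f + Lb g" and s2: "\<And>c f. Lb (smult c f) = smult c (Lb f)"
    and b: "\<And>n. La ([:\<eta>1, \<xi>1:] ^ n) = Lb ([:\<eta>1, \<xi>1:] ^ n)"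
  shows "La f = Lb f"
proof -
  have "La f = La (\<Sum>n\<le>degree f. smult (coeff (pcompose f [:- \<eta>1/\<xi>1, 1/\<xi>1:]) n) ([:\<eta>1, \<xi>1:] ^ n))"
    using expand[OF xi1, of f \<eta>1] by simp
  also have "\<dots> = Lb (\<Sum>n\<le>degree f. smult (coeff (pcompose f [:- \<eta>1/\<xi>1, 1/\<xi>1:]) n) ([:\<eta>1, \<xi>1:] ^ n))"
    by (simp add: additive_sum[OF a1] additive_sum[OF a2] s1 s2 b)
  also have "\<dots> = Lb f"
    using expand[OF xi1, of f \<eta>1] by simp
  finally show ?thesis .
qed


lemma gp0: "gpoly e 0 x = 1"
  unfolding gpoly_def by simp

lemma pderiv_h1: "pderiv ([:\<eta>1, \<xi>1:] ^ Suc j) = smult (of_nat (Suc j) * \<xi>1) ([:\<eta>1, \<xi>1:] ^ j)"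
  by (subst pderiv_power_Suc) (simp add: pderiv_pCons mult.commute)

lemma pderiv_gp: "pderiv (gpoly e (Suc j) [:\<eta>2, \<xi>2:]) = smult (of_nat (Suc j) * \<xi>2) (gpoly e j [:\<eta>2, \<xi>2:])"
  unfolding gpoly_pcompose[of e _ "[:\<eta>2, \<xi>2:]"]
  by (simp add: pderiv_pcompose pderiv_gg_Suc pcompose_smult pderiv_pCons mult.commute)

lemma gp_rec: "gpoly e (Suc (Suc j)) [:\<eta>2, \<xi>2:] = ([:\<eta>2, \<xi>2:] + [:of_nat (Suc j):]) * gpoly e (Suc j) [:\<eta>2, \<xi>2:]
     - smult (of_nat (Suc j)) (([:\<eta>2, \<xi>2:] - [:e:]) * gpoly e j [:\<eta>2, \<xi>2:])"
proof -
  have "pcompose (Rr e j) [:\<eta>2, \<xi>2:] = 0" by (simp add: Rr_zero)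
  then have "pcompose (gg e (Suc (Suc j))) [:\<eta>2, \<xi>2:] - ([:\<eta>2, \<xi>2:] + [:of_nat (Suc j):]) * pcompose (gg e (Suc j)) [:\<eta>2, \<xi>2:]
     + smult (of_nat (Suc j)) (([:\<eta>2, \<xi>2:] - [:e:]) * pcompose (gg e j) [:\<eta>2, \<xi>2:]) = 0"
    unfolding Rr_def pcompose_add pcompose_diff pcompose_mult pcompose_smult
    by (simp add: pcompose_pCons)
  then show ?thesis
    unfolding gpoly_pcompose[of e _ "[:\<eta>2, \<xi>2:]", symmetric]
    by (simp add: algebra_simps)
qed


lemma psi_1: "psi 1 = 1"
  using psi_h1[of 0] by (simp add: gp0)

lemma psi_const: "psi [:c:] = [:c:]"
  using psi_smult[of c 1] by (simp add: psi_1)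

lemma gp1: "gpoly e 1 [:\<eta>2, \<xi>2:] = [:\<eta>2, \<xi>2:]"
  unfolding gpoly_pcompose[of e _ "[:\<eta>2, \<xi>2:]"] gg1 by (simp add: pcompose_pCons)

lemma psiF_basis:
  assumes k: "\<alpha>1 * \<xi>1 = \<alpha>2 * \<xi>2"
  shows "psi (smult \<alpha>1 (opF \<alpha>1 [:\<eta>1, \<xi>1:] ([:\<eta>1, \<xi>1:] ^ n)))
       = smult \<alpha>2 (opF \<alpha>2 [:\<eta>2, \<xi>2:] (psi ([:\<eta>1, \<xi>1:] ^ n)))"
proof (cases n)
  case 0
  then show ?thesis by (simp add: opF_lin psi_smult psi_1 psi_const k)
next
  case (Suc j)
  have "smult \<alpha>1 (opF \<alpha>1 [:\<eta>1, \<xi>1:] ([:\<eta>1, \<xi>1:] ^ Suc j))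
      = smult (\<alpha>1 * \<xi>1) ([:\<eta>1, \<xi>1:] ^ Suc j) - smult (\<alpha>1 * (of_nat (Suc j) * \<xi>1)) ([:\<eta>1, \<xi>1:] ^ j)"
    by (simp only: opF_lin pderiv_h1 smult_diff_right smult_smult)
  then have "psi (smult \<alpha>1 (opF \<alpha>1 [:\<eta>1, \<xi>1:] ([:\<eta>1, \<xi>1:] ^ Suc j)))
     = smult (\<alpha>1 * \<xi>1) (gpoly (\<eta>2 - \<eta>1) (Suc j) [:\<eta>2, \<xi>2:]) - smult (\<alpha>1 * (of_nat (Suc j) * \<xi>1)) (gpoly (\<eta>2 - \<eta>1) j [:\<eta>2, \<xi>2:])"
    by (simp only: psi_diff psi_smult psi_h1)
  also have "\<dots> = smult \<alpha>2 (opF \<alpha>2 [:\<eta>2, \<xi>2:] (gpoly (\<eta>2 - \<eta>1) (Suc j) [:\<eta>2, \<xi>2:]))"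
    using k by (simp only: opF_lin pderiv_gp smult_diff_right smult_smult) (simp add: k mult.left_commute[of \<alpha>1] mult.left_commute[of \<alpha>2])
  finally show ?thesis unfolding Suc psi_h1 .
qed

lemma psiG_basis:
  assumes k: "\<alpha>1 * \<xi>1 = \<alpha>2 * \<xi>2"
  shows "psi (opG \<alpha>1 [:\<eta>1, \<xi>1:] ([:\<eta>1, \<xi>1:] ^ n))
       = opG \<alpha>2 [:\<eta>2, \<xi>2:] (psi ([:\<eta>1, \<xi>1:] ^ n))"
proof (cases n)
  case 0
  have "opG \<alpha>1 [:\<eta>1, \<xi>1:] 1 = [:\<eta>1, \<xi>1:] ^ 1 + smult (\<alpha>1 * \<xi>1) ([:\<eta>1, \<xi>1:] ^ 0)"
    by (simp add: opG_lin algebra_simps)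
  then have "psi (opG \<alpha>1 [:\<eta>1, \<xi>1:] 1) = gpoly (\<eta>2 - \<eta>1) 1 [:\<eta>2, \<xi>2:] + smult (\<alpha>1 * \<xi>1) (gpoly (\<eta>2 - \<eta>1) 0 [:\<eta>2, \<xi>2:])"
    by (simp only: psi_add psi_smult psi_h1)
  also have "\<dots> = opG \<alpha>2 [:\<eta>2, \<xi>2:] 1"
    by (simp add: gp1 gp1[unfolded One_nat_def] gp0 opG_lin k algebra_simps)
  finally show ?thesis using 0 by (simp add: psi_1)
next
  case (Suc j)
  define z where "z = [:\<eta>1, \<xi>1:]"
  have "opG \<alpha>1 z (z ^ Suc j)
      = z ^ Suc (Suc j) + smult (\<alpha>1 * \<xi>1 - of_nat (Suc j)) (z ^ Suc j) + smult (of_nat (Suc j) * \<eta>1) (z ^ j)"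
  proof -
    have "poly (opG \<alpha>1 z (z ^ Suc j)) y = poly (z ^ Suc (Suc j) + smult (\<alpha>1 * \<xi>1 - of_nat (Suc j)) (z ^ Suc j) + smult (of_nat (Suc j) * \<eta>1) (z ^ j)) y" for y
    proof -
      define w where "w = (\<eta>1 + y * \<xi>1) ^ j"
      show ?thesis unfolding z_def opG_lin pderiv_h1
        by (simp add: w_def[symmetric] algebra_simps)
    qed
    then show ?thesis using poly_eq_poly_eq_iff by blast
  qed
  then have "psi (opG \<alpha>1 z (z ^ Suc j)) = gpoly (\<eta>2 - \<eta>1) (Suc (Suc j)) [:\<eta>2, \<xi>2:]
      + smult (\<alpha>1 * \<xi>1 - of_nat (Suc j)) (gpoly (\<eta>2 - \<eta>1) (Suc j) [:\<eta>2, \<xi>2:])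
      + smult (of_nat (Suc j) * \<eta>1) (gpoly (\<eta>2 - \<eta>1) j [:\<eta>2, \<xi>2:])"
    unfolding z_def by (simp only: psi_add psi_smult psi_h1)
  also have "\<dots> = opG \<alpha>2 [:\<eta>2, \<xi>2:] (gpoly (\<eta>2 - \<eta>1) (Suc j) [:\<eta>2, \<xi>2:])"
  proof -
    have "poly (gpoly (\<eta>2 - \<eta>1) (Suc (Suc j)) [:\<eta>2, \<xi>2:]
      + smult (\<alpha>1 * \<xi>1 - of_nat (Suc j)) (gpoly (\<eta>2 - \<eta>1) (Suc j) [:\<eta>2, \<xi>2:])
      + smult (of_nat (Suc j) * \<eta>1) (gpoly (\<eta>2 - \<eta>1) j [:\<eta>2, \<xi>2:])) y
      = poly (opG \<alpha>2 [:\<eta>2, \<xi>2:] (gpoly (\<eta>2 - \<eta>1) (Suc j) [:\<eta>2, \<xi>2:])) y" for y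
    proof -
      define A where "A = poly (gpoly (\<eta>2 - \<eta>1) (Suc j) [:\<eta>2, \<xi>2:]) y"
      define B where "B = poly (gpoly (\<eta>2 - \<eta>1) j [:\<eta>2, \<xi>2:]) y"
      show ?thesis
        unfolding gp_rec[of "\<eta>2 - \<eta>1" j] opG_lin pderiv_gp
        by (simp add: A_def[symmetric] B_def[symmetric] k algebra_simps)
    qed
    then show ?thesis using poly_eq_poly_eq_iff by blast
  qed
  finally show ?thesis unfolding Suc z_def psi_h1 .
qed


lemma opF_add: "opF \<alpha> h (f + g) = opF \<alpha> h f + opF \<alpha> h g"
  unfolding opF_def by (simp add: algebra_simps pderiv_add)
lemma opF_smult: "opF \<alpha> h (smult c f) = smult c (opF \<alpha> h f)"
  unfolding opF_def by (simp add: smult_diff_right pderiv_smult mult_smult_right)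
lemma opG_add: "opG \<alpha> h (f + g) = opG \<alpha> h f + opG \<alpha> h g"
  unfolding opG_def by (simp add: opF_add smult_add_right distrib_left)
lemma opG_smult: "opG \<alpha> h (smult c f) = smult c (opG \<alpha> h f)"
  unfolding opG_def by (simp add: opF_smult smult_add_right mult_smult_right mult.commute)

lemma psiF:
  assumes k: "\<alpha>1 * \<xi>1 = \<alpha>2 * \<xi>2"
  shows "psi (smult \<alpha>1 (opF \<alpha>1 [:\<eta>1, \<xi>1:] f)) = smult \<alpha>2 (opF \<alpha>2 [:\<eta>2, \<xi>2:] (psi f))"
  by (rule linear_eq[where La = "\<lambda>f. psi (smult \<alpha>1 (opF \<alpha>1 [:\<eta>1, \<xi>1:] f))"
          and Lb = "\<lambda>f. smult \<alpha>2 (opF \<alpha>2 [:\<eta>2, \<xi>2:] (psi f))"])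
     (simp_all add: opF_add opF_smult psi_add psi_smult smult_add_right psiF_basis[OF k, unfolded psi_smult] mult.commute)

lemma psiG:
  assumes k: "\<alpha>1 * \<xi>1 = \<alpha>2 * \<xi>2"
  shows "psi (opG \<alpha>1 [:\<eta>1, \<xi>1:] f) = opG \<alpha>2 [:\<eta>2, \<xi>2:] (psi f)"
  by (rule linear_eq[where La = "\<lambda>f. psi (opG \<alpha>1 [:\<eta>1, \<xi>1:] f)"
          and Lb = "\<lambda>f. opG \<alpha>2 [:\<eta>2, \<xi>2:] (psi f)"])
     (simp_all add: opG_add opG_smult psi_add psi_smult psiG_basis[OF k])

lemma M_add: "map_poly psi (P + Q) = map_poly psi P + map_poly psi Q"
  using add[of P Q] by (simp add: phi_map)

lemma M_sconst: "map_poly psi (smult [:c:] P) = smult [:c:] (map_poly psi P)"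
  using scal[of c P] by (simp add: phi_map)

lemma M_pCons: "map_poly psi (pCons a P) = pCons (psi a) (map_poly psi P)"
  by (rule map_poly_pCons) (rule psi_0)

lemma M_X: "map_poly psi (pCons (- [:a:]) 1 * Q) = pCons (- [:a:]) 1 * map_poly psi Q"
proof -
  have "pCons (- [:a:]) 1 * Q = smult [:- a:] Q + pCons 0 Q" by simp
  then show ?thesis by (simp add: M_add M_sconst M_pCons psi_0)
qed

lemma M_Xpow: "map_poly psi (pCons (- [:a:]) 1 ^ i * Q) = pCons (- [:a:]) 1 ^ i * map_poly psi Q"
proof (induction i)
  case 0 then show ?case by simp
next
  case (Suc i)
  have "map_poly psi (pCons (- [:a:]) 1 ^ Suc i * Q) = map_poly psi (pCons (- [:a:]) 1 * (pCons (- [:a:]) 1 ^ i * Q))"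
    by (simp only: power_Suc mult.assoc)
  also have "\<dots> = pCons (- [:a:]) 1 ^ Suc i * map_poly psi Q"
    by (simp only: M_X Suc.IH power_Suc mult.assoc)
  finally show ?case .
qed

lemma M_omega:
  assumes k: "\<alpha>1 * \<xi>1 = \<alpha>2 * \<xi>2"
  shows "map_poly psi (omega_mono lam \<alpha>1 [:\<eta>1, \<xi>1:] m f i) = omega_mono lam \<alpha>2 [:\<eta>2, \<xi>2:] m (psi f) i"
proof -
  have A: "psi (smult (of_int m) (opG \<alpha>1 [:\<eta>1, \<xi>1:] f) - smult (of_int m ^ 2 * \<alpha>1) (opF \<alpha>1 [:\<eta>1, \<xi>1:] f))
     = smult (of_int m) (opG \<alpha>2 [:\<eta>2, \<xi>2:] (psi f)) - smult (of_int m ^ 2 * \<alpha>2) (opF \<alpha>2 [:\<eta>2, \<xi>2:] (psi f))"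
    using psiF[OF k, of f] psiG[OF k, of f]
    by (simp add: psi_diff psi_smult smult_smult[symmetric] del: smult_smult)
  show ?thesis
    unfolding omega_mono_def M_sconst M_Xpow
    by (simp add: M_pCons A psi_0)
qed


lemma coeff_phi: "coeff (\<phi> P) i = psi (coeff P i)"
proof -
  have "\<phi> P = map_poly psi P" by (rule phi_map)
  then show ?thesis using coeff_map_poly[of psi P i, OF psi_0] by argo
qed

lemma phi_omega_mono:
  assumes k: "\<alpha>1 * \<xi>1 = \<alpha>2 * \<xi>2"
  shows "\<phi> (omega_mono lam \<alpha>1 [:\<eta>1, \<xi>1:] m f i) = omega_mono lam \<alpha>2 [:\<eta>2, \<xi>2:] m (psi f) i"
proof -
  have "\<phi> (omega_mono lam \<alpha>1 [:\<eta>1, \<xi>1:] m f i) = map_poly psi (omega_mono lam \<alpha>1 [:\<eta>1, \<xi>1:] m f i)"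
    by (rule phi_map)
  also have "\<dots> = omega_mono lam \<alpha>2 [:\<eta>2, \<xi>2:] m (psi f) i" by (rule M_omega[OF k])
  finally show ?thesis .
qed

lemma phi_omega:
  assumes k: "\<alpha>1 * \<xi>1 = \<alpha>2 * \<xi>2"
  shows "\<phi> (omega_act lam \<alpha>1 [:\<eta>1, \<xi>1:] m P) = omega_act lam \<alpha>2 [:\<eta>2, \<xi>2:] m (\<phi> P)"
proof -
  have "\<phi> (omega_act lam \<alpha>1 [:\<eta>1, \<xi>1:] m P)
      = (\<Sum>i\<le>degree P. omega_mono lam \<alpha>2 [:\<eta>2, \<xi>2:] m (psi (coeff P i)) i)"
    unfolding omega_act_def phi_sum by (simp add: phi_omega_mono[OF k])
  also have "\<dots> = (\<Sum>i\<le>degree (\<phi> P). omega_mono lam \<alpha>2 [:\<eta>2, \<xi>2:] m (psi (coeff P i)) i)"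
  proof (rule sum.mono_neutral_right)
    show "{..degree (\<phi> P)} \<subseteq> {..degree P}"
    proof -
      have "degree (\<phi> P) \<le> degree P"
        by (rule degree_le) (simp add: coeff_phi psi_0 coeff_eq_0)
      then show ?thesis by auto
    qed
    show "\<forall>i\<in>{..degree P} - {..degree (\<phi> P)}. omega_mono lam \<alpha>2 [:\<eta>2, \<xi>2:] m (psi (coeff P i)) i = 0"
    proof
      fix i assume "i \<in> {..degree P} - {..degree (\<phi> P)}"
      then have "coeff (\<phi> P) i = 0" by (simp add: coeff_eq_0)
      then have "psi (coeff P i) = 0" by (simp add: coeff_phi psi_0)
      then show "omega_mono lam \<alpha>2 [:\<eta>2, \<xi>2:] m (psi (coeff P i)) i = 0" by (simp add: omega_mono_0)
    qed
  qed simp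
  also have "\<dots> = omega_act lam \<alpha>2 [:\<eta>2, \<xi>2:] m (\<phi> P)"
    unfolding omega_act_def by (simp add: coeff_phi psi_0)
  finally show ?thesis .
qed

lemma psi_zero_imp: "psi f = 0 \<Longrightarrow> f = 0"
proof (rule ccontr)
  assume z: "psi f = 0" and nz: "f \<noteq> 0"
  define N where "N = degree f"
  define F where "F = pcompose f [:- \<eta>1/\<xi>1, 1/\<xi>1:]"
  have ex: "f = (\<Sum>n\<le>N. smult (coeff F n) ([:\<eta>1, \<xi>1:] ^ n))"
    unfolding N_def F_def by (rule expand[OF xi1])
  have dF: "degree F = N" unfolding F_def N_def using xi1 by (simp add: degree_pcompose)
  have "F \<noteq> 0" using ex nz by auto
  then have cN: "coeff F N \<noteq> 0" using dF by auto
  have "psi f = (\<Sum>n\<le>N. smult (coeff F n) (gpoly (\<eta>2 - \<eta>1) n [:\<eta>2, \<xi>2:]))"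
    by (subst ex) (simp add: psi_sum psi_smult psi_h1)
  then have "coeff (psi f) N = (\<Sum>n\<le>N. coeff F n * coeff (gpoly (\<eta>2 - \<eta>1) n [:\<eta>2, \<xi>2:]) N)"
    by (simp add: coeff_sum)
  also have "\<dots> = (\<Sum>n\<le>N. if n = N then coeff F N * \<xi>2 ^ N else 0)"
  proof (rule sum.cong)
    fix n assume "n \<in> {..N}"
    then show "coeff F n * coeff (gpoly (\<eta>2 - \<eta>1) n [:\<eta>2, \<xi>2:]) N = (if n = N then coeff F N * \<xi>2 ^ N else 0)"
      using gp_lead[OF xi2] gp_degree[OF xi2]
      by (auto simp: coeff_eq_0)
  qed simp
  also have "\<dots> = coeff F N * \<xi>2 ^ N" by simp
  finally have "coeff (psi f) N \<noteq> 0" using cN xi2 by simp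
  then show False using z by simp
qed

lemma psi_inj: "inj psi"
proof (rule injI)
  fix x y assume "psi x = psi y"
  then have "psi (x - y) = 0" by (simp add: psi_diff)
  then have "x - y = 0" by (rule psi_zero_imp)
  then show "x = y" by simp
qed

lemma psi_surj_le: "degree q \<le> N \<Longrightarrow> q \<in> range psi"
proof (induction N arbitrary: q)
  case 0
  then have "q = [:coeff q 0:]" by (metis degree_0_id le_zero_eq)
  then have "q = psi [:coeff q 0:]" by (metis psi_const)
  then show ?case by blast
next
  case (Suc N)
  define c where "c = coeff q (Suc N) / \<xi>2 ^ Suc N"
  define q' where "q' = q - smult c (gpoly (\<eta>2 - \<eta>1) (Suc N) [:\<eta>2, \<xi>2:])"
  have "degree q' \<le> N"
  proof (rule degree_le, intro allI impI)
    fix i assume "N < i"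
    then consider "i = Suc N" | "Suc N < i" by linarith
    then show "coeff q' i = 0"
    proof cases
      case 1 then show ?thesis unfolding q'_def c_def using gp_lead[OF xi2] xi2 by simp
    next
      case 2 then show ?thesis unfolding q'_def using gp_degree[OF xi2] Suc.prems
        by (simp add: coeff_eq_0)
    qed
  qed
  then obtain f' where "q' = psi f'" using Suc.IH by blast
  then have "q = psi (f' + smult c ([:\<eta>1, \<xi>1:] ^ Suc N))"
    unfolding q'_def by (simp only: psi_add psi_smult psi_h1) (simp add: algebra_simps)
  then show ?case by blast
qed

lemma psi_surj: "surj psi"
  using psi_surj_le by blast

lemma phi_bij: "bij \<phi>"
proof (rule bijI)
  show "inj \<phi>"
  proof (rule injI)
    fix P Q assume eq: "\<phi> P = \<phi> Q"
    show "P = Q"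
    proof (rule poly_eqI)
      fix i
      have "coeff (\<phi> P) i = coeff (\<phi> Q) i" using eq by (rule arg_cong)
      then have "psi (coeff P i) = psi (coeff Q i)"
        unfolding coeff_phi .
      then show "coeff P i = coeff Q i" by (rule injD[OF psi_inj])
    qed
  qed
  show "surj \<phi>"
  proof (rule surjI)
    fix Q
    have i0: "inv psi 0 = 0"
      using inv_f_f[OF psi_inj, of 0] unfolding psi_0 .
    show "\<phi> (map_poly (inv psi) Q) = Q"
    proof (rule poly_eqI)
      fix i
      show "coeff (\<phi> (map_poly (inv psi) Q)) i = coeff Q i"
        unfolding coeff_phi coeff_map_poly[of "inv psi", OF i0]
        by (rule surj_f_inv_f[OF psi_surj])
    qed
  qed
qed

end

theorem lemma3p3:
  fixes lam \<alpha>1 \<alpha>2 \<xi>1 \<eta>1 \<xi>2 \<eta>2 :: complex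
    and \<phi> :: "complex poly poly \<Rightarrow> complex poly poly"
  assumes "lam \<noteq> 0" and "\<alpha>1 \<noteq> 0" and "\<alpha>2 \<noteq> 0"
    and "\<alpha>1 * \<xi>1 = \<alpha>2 * \<xi>2" and "\<alpha>1 * \<xi>1 \<noteq> 0"
    and add: "\<And>P Q. \<phi> (P + Q) = \<phi> P + \<phi> Q"
    and scal: "\<And>c P. \<phi> (smult [:c:] P) = smult [:c:] (\<phi> P)"
    and basis: "\<And>n i. \<phi> (monom ([:\<eta>1, \<xi>1:] ^ n) i)
                       = monom (gpoly (\<eta>2 - \<eta>1) n [:\<eta>2, \<xi>2:]) i"
  shows "bij \<phi> \<and>
         (\<forall>m P. \<phi> (omega_act lam \<alpha>1 [:\<eta>1, \<xi>1:] m P)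
                 = omega_act lam \<alpha>2 [:\<eta>2, \<xi>2:] m (\<phi> P))"
proof -
  have xi1: "\<xi>1 \<noteq> 0" using assms(5) by auto
  have xi2: "\<xi>2 \<noteq> 0" using assms(4,5) by auto
  show ?thesis
    using phi_bij[OF add scal basis xi1 xi2] phi_omega[OF add scal basis xi1 xi2 assms(4)] by blast
qed

end
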